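(* Let $\lambda=\Theta\Rightarrow\Omega$ and $\lambda^*$ be as in the context. For every model $\mathcal{M}=\langle W,V\rangle$, $w\in W$ and $X\subseteq W$: $\mathcal{M},w,X\vDash\lambda$ if and only if $\mathcal{M},w,X\vDash\lambda^*$, where $\vDash$ is the Kolodny–MacFarlane semantics.
   Context: Formulas: $\varphi::= p\mid \neg\varphi\mid (\varphi\wedge\varphi)\mid \Box\varphi \mid (\varphi\Rightarrow\varphi)$; $\vee,\to,\bot$ as usual, $\Diamond\varphi:=\neg\Box\neg\varphi$; nonmodal formulas contain neither $\Box$ nor $\Rightarrow$. Models $\mathcal{M}=\langle W,V\rangle$: $W$ nonempty, $V(p)\subseteq W$. Kolodny–MacFarlane semantics at $\mathcal{M},w,X$ ($w\in W$, $X\subseteq W$): $p$ true iff $w\in V(p)$; $\neg,\wedge$ Boolean; $\Box\varphi$ true iff $\varphi$ is true at $\mathcal{M},v,X$ for all $v\in X$; $\varphi\Rightarrow\psi$ true iff $\mathcal{M},w,X'\vDash\Box\psi$ for every $X'$ with (i) $X'\subseteq X$, (ii) $X'\subseteq\llbracket\varphi\rrbracket^{\mathcal{M},X'}$, (iii) no $X''$ satisfying (i),(ii) has $X'\subsetneq X''$; here $\llbracket\varphi\rrbracket^{\mathcal{M},Y}=\{v\in Y\mid \mathcal{M},v,Y\vDash\varphi\}$. Let $\lambda=\Theta\Rightarrow\Omega$ with $\Theta=\bigvee_{i\in I}\theta_i$, $\Omega=\bigvee_{j\in J}\omega_j$ ($I,J$ finite), $\theta_i=\varphi_i\wedge\Box\psi_i\wedge\bigwedge_{n\in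 D_i}\Diamond\chi_n$, $\omega_j=\alpha_j\wedge\Box\beta_j\wedge\bigwedge_{m\in E_j}\Diamond\gamma_m$, all $\varphi_i,\psi_i,\chi_n,\alpha_j,\beta_j,\gamma_m$ nonmodal. For $K\subseteq I$: $\mathtt{info}_K:=(\bigvee_{k\in K}\varphi_k)\wedge\bigwedge_{k\in K}\psi_k$; $\mathtt{good}_K:=\bigwedge_{k\in K}\bigwedge_{n\in D_k}\Diamond(\mathtt{info}_K\wedge\chi_n)$; $\mathtt{max}_K:=\mathtt{good}_K\wedge\bigwedge_{L\subseteq I}\big((\Box(\mathtt{info}_K\to\mathtt{info}_L)\wedge\Diamond(\neg\mathtt{info}_K\wedge\mathtt{info}_L))\to\neg\mathtt{good}_L\big)$. For $S\subseteq J$: $\mathtt{state}_S:=\bigwedge_{s\in S}\alpha_s\wedge\bigwedge_{s\in J\setminus S}\neg\alpha_s$. Then $\lambda^*:=\bigwedge_{K\subseteq I}\Big(\mathtt{max}_K\to\Box\big(\mathtt{info}_K\to\bigwedge_{S\subseteq J}(\mathtt{state}_S\to\bigvee_{s\in S}(\Box(\mathtt{info}_K\to\beta_s)\wedge\bigwedge_{m\in E_s}\Diamond(\mathtt{info}_K\wedge\gamma_m)))\big)\Big)$, with empty disjunction $\bot$ and empty conjunction $\top$. *)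

theory Defs
  imports Main
begin

datatype 'p form =
    Atom 'p
  | Neg "'p form"
  | And "'p form" "'p form"
  | Box "'p form"
  | Cond "'p form" "'p form"

definition Bot :: "'p form" where "Bot = And (Atom undefined) (Neg (Atom undefined))"
definition Top :: "'p form" where "Top = Neg Bot"
definition Or :: "'p form \<Rightarrow> 'p form \<Rightarrow> 'p form" where "Or a b = Neg (And (Neg a) (Neg b))"
definition Imp :: "'p form \<Rightarrow> 'p form \<Rightarrow> 'p form" where "Imp a b = Neg (And a (Neg b))"
definition Dia :: "'p form \<Rightarrow> 'p form" where "Dia a = Neg (Box (Neg a))"

fun nonmodal :: "'p form \<Rightarrow> bool" where
  "nonmodal (Atom p) = True"
| "nonmodal (Neg a) = nonmodal a"
| "nonmodal (And a b) = (nonmodal a \<and> nonmodal b)"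
| "nonmodal (Box a) = False"
| "nonmodal (Cond a b) = False"

definition enum :: "'a set \<Rightarrow> 'a list" where "enum S = (SOME xs. set xs = S)"

fun BigOrL :: "'p form list \<Rightarrow> 'p form" where
  "BigOrL [] = Bot"
| "BigOrL (x # xs) = Or x (BigOrL xs)"

fun BigAndL :: "'p form list \<Rightarrow> 'p form" where
  "BigAndL [] = Top"
| "BigAndL (x # xs) = And x (BigAndL xs)"

definition BigOr :: "('a \<Rightarrow> 'p form) \<Rightarrow> 'a set \<Rightarrow> 'p form" where
  "BigOr f S = BigOrL (map f (enum S))"

definition BigAnd :: "('a \<Rightarrow> 'p form) \<Rightarrow> 'a set \<Rightarrow> 'p form" where
  "BigAnd f S = BigAndL (map f (enum S))"

definition is_model :: "'w set \<Rightarrow> ('p \<Rightarrow> 'w set) \<Rightarrow> bool" where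
  "is_model W V \<longleftrightarrow> W \<noteq> {} \<and> (\<forall>p. V p \<subseteq> W)"

fun sat :: "('p \<Rightarrow> 'w set) \<Rightarrow> 'w \<Rightarrow> 'w set \<Rightarrow> 'p form \<Rightarrow> bool" where
  "sat V w X (Atom p) = (w \<in> V p)"
| "sat V w X (Neg a) = (\<not> sat V w X a)"
| "sat V w X (And a b) = (sat V w X a \<and> sat V w X b)"
| "sat V w X (Box a) = (\<forall>v\<in>X. sat V v X a)"
| "sat V w X (Cond a b) =
     (\<forall>X'. (X' \<subseteq> X \<and> X' \<subseteq> {v\<in>X'. sat V v X' a}
            \<and> \<not> (\<exists>X''. X'' \<subseteq> X \<and> X'' \<subseteq> {v\<in>X''. sat V v X'' a} \<and> X' \<subset> X''))
          \<longrightarrow> (\<forall>v\<in>X'. sat V v X' b))"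

definition Theta :: "'i set \<Rightarrow> ('i \<Rightarrow> 'p form) \<Rightarrow> ('i \<Rightarrow> 'p form) \<Rightarrow> ('i \<Rightarrow> 'n set)
    \<Rightarrow> ('n \<Rightarrow> 'p form) \<Rightarrow> 'p form" where
  "Theta I \<phi> \<psi> D \<chi> = BigOr (\<lambda>i. And (\<phi> i) (And (Box (\<psi> i)) (BigAnd (\<lambda>n. Dia (\<chi> n)) (D i)))) I"

definition info :: "('i \<Rightarrow> 'p form) \<Rightarrow> ('i \<Rightarrow> 'p form) \<Rightarrow> 'i set \<Rightarrow> 'p form" where
  "info \<phi> \<psi> K = And (BigOr \<phi> K) (BigAnd \<psi> K)"

definition good :: "('i \<Rightarrow> 'p form) \<Rightarrow> ('i \<Rightarrow> 'p form) \<Rightarrow> ('i \<Rightarrow> 'n set)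
    \<Rightarrow> ('n \<Rightarrow> 'p form) \<Rightarrow> 'i set \<Rightarrow> 'p form" where
  "good \<phi> \<psi> D \<chi> K = BigAnd (\<lambda>k. BigAnd (\<lambda>n. Dia (And (info \<phi> \<psi> K) (\<chi> n))) (D k)) K"

definition maxi :: "'i set \<Rightarrow> ('i \<Rightarrow> 'p form) \<Rightarrow> ('i \<Rightarrow> 'p form) \<Rightarrow> ('i \<Rightarrow> 'n set)
    \<Rightarrow> ('n \<Rightarrow> 'p form) \<Rightarrow> 'i set \<Rightarrow> 'p form" where
  "maxi I \<phi> \<psi> D \<chi> K = And (good \<phi> \<psi> D \<chi> K)
     (BigAnd (\<lambda>L. Imp (And (Box (Imp (info \<phi> \<psi> K) (info \<phi> \<psi> L)))
                            (Dia (And (Neg (info \<phi> \<psi> K)) (info \<phi> \<psi> L))))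
                       (Neg (good \<phi> \<psi> D \<chi> L))) (Pow I))"

definition state :: "'j set \<Rightarrow> ('j \<Rightarrow> 'p form) \<Rightarrow> 'j set \<Rightarrow> 'p form" where
  "state J \<alpha> S = And (BigAnd \<alpha> S) (BigAnd (\<lambda>s. Neg (\<alpha> s)) (J - S))"

definition lamstar :: "'i set \<Rightarrow> ('i \<Rightarrow> 'p form) \<Rightarrow> ('i \<Rightarrow> 'p form) \<Rightarrow> ('i \<Rightarrow> 'n set)
    \<Rightarrow> ('n \<Rightarrow> 'p form) \<Rightarrow> 'j set \<Rightarrow> ('j \<Rightarrow> 'p form) \<Rightarrow> ('j \<Rightarrow> 'p form)
    \<Rightarrow> ('j \<Rightarrow> 'm set) \<Rightarrow> ('m \<Rightarrow> 'p form) \<Rightarrow> 'p form" where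
  "lamstar I \<phi> \<psi> D \<chi> J \<alpha> \<beta> E \<gamma> =
     BigAnd (\<lambda>K. Imp (maxi I \<phi> \<psi> D \<chi> K)
        (Box (Imp (info \<phi> \<psi> K)
           (BigAnd (\<lambda>S. Imp (state J \<alpha> S)
               (BigOr (\<lambda>s. And (Box (Imp (info \<phi> \<psi> K) (\<beta> s)))
                               (BigAnd (\<lambda>m. Dia (And (info \<phi> \<psi> K) (\<gamma> m))) (E s))) S))
             (Pow J))))) (Pow I)"

end

theory Submission
  imports Defs
begin

lemma set_enum: "finite S \<Longrightarrow> set (enum S) = S"
  unfolding enum_def by (rule someI_ex) (simp add: finite_list)

lemma sat_Bot[simp]: "\<not> sat V w X Bot" by (simp add: Bot_def)
lemma sat_Top[simp]: "sat V w X Top" by (simp add: Top_def)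
lemma sat_Or[simp]: "sat V w X (Or a b) = (sat V w X a \<or> sat V w X b)" by (simp add: Or_def)
lemma sat_Imp[simp]: "sat V w X (Imp a b) = (sat V w X a \<longrightarrow> sat V w X b)" by (simp add: Imp_def)
lemma sat_Dia[simp]: "sat V w X (Dia a) = (\<exists>v\<in>X. sat V v X a)" by (simp add: Dia_def)

lemma sat_BigOrL: "sat V w X (BigOrL xs) = (\<exists>x\<in>set xs. sat V w X x)"
  by (induction xs) auto
lemma sat_BigAndL: "sat V w X (BigAndL xs) = (\<forall>x\<in>set xs. sat V w X x)"
  by (induction xs) auto

lemma sat_BigOr: "finite S \<Longrightarrow> sat V w X (BigOr f S) = (\<exists>x\<in>S. sat V w X (f x))"
  by (simp add: BigOr_def sat_BigOrL set_enum)
lemma sat_BigAnd: "finite S \<Longrightarrow> sat V w X (BigAnd f S) = (\<forall>x\<in>S. sat V w X (f x))"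
  by (simp add: BigAnd_def sat_BigAndL set_enum)

lemma nm: "nonmodal f \<Longrightarrow> sat V v Y f = sat V v Z f"
  by (induction f) auto

lemma sat_Theta:
  assumes "finite I" "\<forall>i\<in>I. finite (D i)"
    "\<forall>i\<in>I. nonmodal (\<phi> i) \<and> nonmodal (\<psi> i) \<and> (\<forall>n\<in>D i. nonmodal (\<chi> n))"
  shows "sat V v Y (Theta I \<phi> \<psi> D \<chi>) \<longleftrightarrow>
    (\<exists>i\<in>I. sat V v {} (\<phi> i) \<and> (\<forall>u\<in>Y. sat V u {} (\<psi> i)) \<and> (\<forall>n\<in>D i. \<exists>u\<in>Y. sat V u {} (\<chi> n)))"
proof -
  have e1: "\<And>i u. i \<in> I \<Longrightarrow> sat V u Y (\<phi> i) = sat V u {} (\<phi> i)"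
    and e2: "\<And>i u. i \<in> I \<Longrightarrow> sat V u Y (\<psi> i) = sat V u {} (\<psi> i)"
    and e3: "\<And>i n u. i \<in> I \<Longrightarrow> n \<in> D i \<Longrightarrow> sat V u Y (\<chi> n) = sat V u {} (\<chi> n)"
    using assms(3) nm[of "\<phi> _" V _ Y "{}"] nm[of "\<psi> _" V _ Y "{}"] nm[of "\<chi> _" V _ Y "{}"] by simp_all
  have "sat V v Y (Theta I \<phi> \<psi> D \<chi>) \<longleftrightarrow>
    (\<exists>i\<in>I. sat V v Y (\<phi> i) \<and> (\<forall>u\<in>Y. sat V u Y (\<psi> i)) \<and> (\<forall>n\<in>D i. \<exists>u\<in>Y. sat V u Y (\<chi> n)))"
    using assms(1,2) by (simp add: Theta_def sat_BigOr sat_BigAnd cong: bex_cong)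
  also have "\<dots> \<longleftrightarrow> (\<exists>i\<in>I. sat V v {} (\<phi> i) \<and> (\<forall>u\<in>Y. sat V u {} (\<psi> i)) \<and> (\<forall>n\<in>D i. \<exists>u\<in>Y. sat V u {} (\<chi> n)))"
    by (intro bex_cong refl conj_cong ball_cong bex_cong) (auto simp: e1 e2 e3)
  finally show ?thesis .
qed

definition Info where "Info V \<phi> \<psi> K = {u. (\<exists>k\<in>K. sat V u {} (\<phi> k)) \<and> (\<forall>k\<in>K. sat V u {} (\<psi> k))}"

lemma sat_info:
  assumes "finite K" "\<forall>i\<in>K. nonmodal (\<phi> i) \<and> nonmodal (\<psi> i)"
  shows "sat V u Y (info \<phi> \<psi> K) \<longleftrightarrow> u \<in> Info V \<phi> \<psi> K"
proof -
  have "sat V u Y (info \<phi> \<psi> K) \<longleftrightarrow> (\<exists>k\<in>K. sat V u Y (\<phi> k)) \<and> (\<forall>k\<in>K. sat V u Y (\<psi> k))"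
    using assms by (simp add: info_def sat_BigOr sat_BigAnd)
  then show ?thesis unfolding Info_def using assms nm[of "\<phi> _" V u Y "{}"] nm[of "\<psi> _" V u Y "{}"]
    by auto
qed

lemma core:
  fixes ph ps :: "'i \<Rightarrow> 'w \<Rightarrow> bool" and ch :: "'n \<Rightarrow> 'w \<Rightarrow> bool" and Om :: "'w set \<Rightarrow> 'w \<Rightarrow> bool" and I :: "'i set" and D :: "'i \<Rightarrow> 'n set" and X :: "'w set"
  assumes Th_def: "Th = (\<lambda>Y v. \<exists>i\<in>I. ph i v \<and> (\<forall>u\<in>Y. ps i u) \<and> (\<forall>n\<in>D i. \<exists>u\<in>Y. ch n u))"
  and Inff_def: "Inff = (\<lambda>K. {u. (\<exists>k\<in>K. ph k u) \<and> (\<forall>k\<in>K. ps k u)})"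
  and G_def: "G = (\<lambda>K. \<forall>k\<in>K. \<forall>n\<in>D k. \<exists>u\<in>X. u \<in> Inff K \<and> ch n u)"
  and Mx_def: "Mx = (\<lambda>K. G K \<and> (\<forall>L\<subseteq>I. (\<forall>u\<in>X. u\<in>Inff K \<longrightarrow> u\<in>Inff L) \<and> (\<exists>u\<in>X. u\<notin>Inff K \<and> u\<in>Inff L) \<longrightarrow> \<not> G L))"
  shows "(\<forall>X'. X'\<subseteq>X \<and> (\<forall>v\<in>X'. Th X' v) \<and> \<not>(\<exists>X''. X''\<subseteq>X \<and> (\<forall>v\<in>X''. Th X'' v) \<and> X'\<subset>X'')
            \<longrightarrow> (\<forall>v\<in>X'. Om X' v))
       \<longleftrightarrow> (\<forall>K\<subseteq>I. Mx K \<longrightarrow> (\<forall>v\<in>X \<inter> Inff K. Om (X \<inter> Inff K) v))"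
proof -
  define Y where "Y = (\<lambda>K. X \<inter> Inff K)"
  define KY where "KY = (\<lambda>Z. {i\<in>I. (\<forall>u\<in>Z. ps i u) \<and> (\<forall>n\<in>D i. \<exists>u\<in>Z. ch n u)})"
  define ThS where "ThS = (\<lambda>Z. \<forall>v\<in>Z. Th Z v)"
  define MaxT where "MaxT = (\<lambda>Z. Z\<subseteq>X \<and> ThS Z \<and> \<not>(\<exists>Z'. Z'\<subseteq>X \<and> ThS Z' \<and> Z\<subset>Z'))"
  have KYI: "KY Z \<subseteq> I" for Z unfolding KY_def by auto
  have f1: "Z \<subseteq> Y (KY Z)" if hyp: "Z\<subseteq>X" "ThS Z" for Z
  proof
    fix v assume v: "v \<in> Z"
    then obtain i where "i\<in>I" "ph i v" "\<forall>u\<in>Z. ps i u" "\<forall>n\<in>D i. \<exists>u\<in>Z. ch n u"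
      using hyp unfolding ThS_def Th_def by blast
    then show "v \<in> Y (KY Z)" using v hyp(1) unfolding Y_def Inff_def KY_def by auto
  qed
  have f2: "ThS (Y K)" if hyp: "K \<subseteq> I" "G K" for K
    unfolding ThS_def
  proof
    fix v assume v: "v \<in> Y K"
    then obtain k where k: "k\<in>K" "ph k v" unfolding Y_def Inff_def by auto
    have "\<forall>u\<in>Y K. ps k u" using k(1) unfolding Y_def Inff_def by auto
    moreover have "\<forall>n\<in>D k. \<exists>u\<in>Y K. ch n u" using hyp(2) k(1) unfolding G_def Y_def by auto
    ultimately show "Th (Y K) v" unfolding Th_def using k hyp(1) by blast
  qed
  have f3: "G (KY Z)" if hyp: "Z\<subseteq>X" "ThS Z" for Z
    unfolding G_def
  proof (intro ballI)
    fix k n assume k: "k \<in> KY Z" and n: "n \<in> D k"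
    then obtain u where "u\<in>Z" "ch n u" unfolding KY_def by auto
    then show "\<exists>u\<in>X. u \<in> Inff (KY Z) \<and> ch n u" using f1[OF hyp] unfolding Y_def by auto
  qed
  have f4: "Z = Y (KY Z) \<and> Mx (KY Z)" if hyp: "MaxT Z" for Z
  proof -
    have Z: "Z\<subseteq>X" "ThS Z" "\<not>(\<exists>Z'. Z'\<subseteq>X \<and> ThS Z' \<and> Z\<subset>Z')" using hyp unfolding MaxT_def by auto
    have s: "Z \<subseteq> Y (KY Z)" using f1 Z by blast
    have t: "ThS (Y (KY Z))" using f2[OF KYI f3] Z by blast
    have yx: "\<And>K. Y K \<subseteq> X" unfolding Y_def by auto
    have eq: "Z = Y (KY Z)" using s t Z(3) yx by blast
    have "Mx (KY Z)" unfolding Mx_def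
    proof (intro conjI allI impI)
      show "G (KY Z)" using f3 Z by blast
      fix L assume L: "L \<subseteq> I" and h: "(\<forall>u\<in>X. u \<in> Inff (KY Z) \<longrightarrow> u \<in> Inff L) \<and> (\<exists>u\<in>X. u \<notin> Inff (KY Z) \<and> u \<in> Inff L)"
      show "\<not> G L"
      proof
        assume "G L"
        then have "ThS (Y L)" using f2 L by blast
        moreover have "Z \<subset> Y L" using h eq unfolding Y_def by auto
        ultimately show False using Z(3) yx by blast
      qed
    qed
    then show ?thesis using eq by blast
  qed
  have f5: "MaxT (Y K)" if hyp: "K \<subseteq> I" "Mx K" for K
  proof -
    have G: "G K" using hyp unfolding Mx_def by auto
    have "\<not>(\<exists>Z'. Z'\<subseteq>X \<and> ThS Z' \<and> Y K\<subset>Z')"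
    proof
      assume "\<exists>Z'. Z'\<subseteq>X \<and> ThS Z' \<and> Y K\<subset>Z'"
      then obtain Z' where Z': "Z'\<subseteq>X" "ThS Z'" "Y K\<subset>Z'" by blast
      have GL: "G (KY Z')" using f3 Z' by blast
      have sub: "Z' \<subseteq> Y (KY Z')" using f1 Z' by blast
      have "(\<forall>u\<in>X. u \<in> Inff K \<longrightarrow> u \<in> Inff (KY Z')) \<and> (\<exists>u\<in>X. u \<notin> Inff K \<and> u \<in> Inff (KY Z'))"
        using Z' sub unfolding Y_def by blast
      then have "\<not> G (KY Z')" using hyp(2) KYI unfolding Mx_def by blast
      then show False using GL by blast
    qed
    moreover have "Y K \<subseteq> X" unfolding Y_def by auto
    ultimately show ?thesis using f2[OF hyp(1) G] unfolding MaxT_def by blast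
  qed
  show ?thesis
  proof
    assume H: "\<forall>X'. X'\<subseteq>X \<and> (\<forall>v\<in>X'. Th X' v) \<and> \<not>(\<exists>X''. X''\<subseteq>X \<and> (\<forall>v\<in>X''. Th X'' v) \<and> X'\<subset>X'')
            \<longrightarrow> (\<forall>v\<in>X'. Om X' v)"
    show "\<forall>K\<subseteq>I. Mx K \<longrightarrow> (\<forall>v\<in>X \<inter> Inff K. Om (X \<inter> Inff K) v)"
    proof (intro allI impI)
      fix K assume "K \<subseteq> I" "Mx K"
      then have "MaxT (Y K)" by (rule f5)
      then show "\<forall>v\<in>X \<inter> Inff K. Om (X \<inter> Inff K) v" using H unfolding MaxT_def ThS_def Y_def by blast
    qed
  next
    assume H: "\<forall>K\<subseteq>I. Mx K \<longrightarrow> (\<forall>v\<in>X \<inter> Inff K. Om (X \<inter> Inff K) v)"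
    show "\<forall>X'. X'\<subseteq>X \<and> (\<forall>v\<in>X'. Th X' v) \<and> \<not>(\<exists>X''. X''\<subseteq>X \<and> (\<forall>v\<in>X''. Th X'' v) \<and> X'\<subset>X'')
            \<longrightarrow> (\<forall>v\<in>X'. Om X' v)"
    proof (intro allI impI)
      fix X' assume "X'\<subseteq>X \<and> (\<forall>v\<in>X'. Th X' v) \<and> \<not>(\<exists>X''. X''\<subseteq>X \<and> (\<forall>v\<in>X''. Th X'' v) \<and> X'\<subset>X'')"
      then have "MaxT X'" unfolding MaxT_def ThS_def by blast
      then have "X' = Y (KY X')" "Mx (KY X')" using f4 by blast+
      then show "\<forall>v\<in>X'. Om X' v" using H KYI unfolding Y_def by metis
    qed
  qed
qed


lemma sat_good:
  assumes "finite K" "\<forall>i\<in>K. finite (D i)"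
    "\<forall>i\<in>K. nonmodal (\<phi> i) \<and> nonmodal (\<psi> i) \<and> (\<forall>n\<in>D i. nonmodal (\<chi> n))"
  shows "sat V w X (good \<phi> \<psi> D \<chi> K) \<longleftrightarrow>
    (\<forall>k\<in>K. \<forall>n\<in>D k. \<exists>u\<in>X. u \<in> Info V \<phi> \<psi> K \<and> sat V u {} (\<chi> n))"
proof -
  have i: "\<And>u. sat V u X (info \<phi> \<psi> K) \<longleftrightarrow> u \<in> Info V \<phi> \<psi> K"
    using assms(1,3) by (intro sat_info) auto
  have c: "\<And>k n u. k \<in> K \<Longrightarrow> n \<in> D k \<Longrightarrow> sat V u X (\<chi> n) = sat V u {} (\<chi> n)"
    using assms(3) nm[of "\<chi> _" V _ X "{}"] by simp
  have "sat V w X (good \<phi> \<psi> D \<chi> K) \<longleftrightarrow>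
    (\<forall>k\<in>K. \<forall>n\<in>D k. \<exists>u\<in>X. sat V u X (info \<phi> \<psi> K) \<and> sat V u X (\<chi> n))"
    using assms(1,2) by (simp add: good_def sat_BigAnd cong: ball_cong)
  also have "\<dots> \<longleftrightarrow> (\<forall>k\<in>K. \<forall>n\<in>D k. \<exists>u\<in>X. u \<in> Info V \<phi> \<psi> K \<and> sat V u {} (\<chi> n))"
    by (intro ball_cong refl) (auto simp: i c)
  finally show ?thesis .
qed

lemma sat_maxi:
  assumes "finite I" "\<forall>i\<in>I. finite (D i)" "K \<subseteq> I"
    "\<forall>i\<in>I. nonmodal (\<phi> i) \<and> nonmodal (\<psi> i) \<and> (\<forall>n\<in>D i. nonmodal (\<chi> n))"
  shows "sat V w X (maxi I \<phi> \<psi> D \<chi> K) \<longleftrightarrow>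
    ((\<lambda>K. \<forall>k\<in>K. \<forall>n\<in>D k. \<exists>u\<in>X. u \<in> Info V \<phi> \<psi> K \<and> sat V u {} (\<chi> n)) K \<and>
     (\<forall>L\<subseteq>I. (\<forall>u\<in>X. u\<in>Info V \<phi> \<psi> K \<longrightarrow> u\<in>Info V \<phi> \<psi> L) \<and> (\<exists>u\<in>X. u\<notin>Info V \<phi> \<psi> K \<and> u\<in>Info V \<phi> \<psi> L)
        \<longrightarrow> \<not> (\<lambda>K. \<forall>k\<in>K. \<forall>n\<in>D k. \<exists>u\<in>X. u \<in> Info V \<phi> \<psi> K \<and> sat V u {} (\<chi> n)) L))"
  (is "?L \<longleftrightarrow> ?R")
proof -
  have gd: "\<And>L. L \<subseteq> I \<Longrightarrow> sat V w X (good \<phi> \<psi> D \<chi> L) \<longleftrightarrow>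
    (\<forall>k\<in>L. \<forall>n\<in>D k. \<exists>u\<in>X. u \<in> Info V \<phi> \<psi> L \<and> sat V u {} (\<chi> n))"
    using assms by (intro sat_good) (auto intro: finite_subset)
  have inf: "\<And>L u Y. L \<subseteq> I \<Longrightarrow> sat V u Y (info \<phi> \<psi> L) \<longleftrightarrow> u \<in> Info V \<phi> \<psi> L"
    using assms by (intro sat_info) (auto intro: finite_subset)
  have "sat V w X (maxi I \<phi> \<psi> D \<chi> K) \<longleftrightarrow> sat V w X (good \<phi> \<psi> D \<chi> K) \<and>
     (\<forall>L\<in>Pow I. (\<forall>u\<in>X. sat V u X (info \<phi> \<psi> K) \<longrightarrow> sat V u X (info \<phi> \<psi> L)) \<and>
        (\<exists>u\<in>X. \<not> sat V u X (info \<phi> \<psi> K) \<and> sat V u X (info \<phi> \<psi> L)) \<longrightarrow> \<not> sat V w X (good \<phi> \<psi> D \<chi> L))"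
    unfolding maxi_def using assms(1) by (simp add: sat_BigAnd del: Pow_iff)
  also have "\<dots> \<longleftrightarrow> ?R"
    using assms(3) by (simp add: gd inf gd[OF PowD] inf[OF PowD] Ball_def cong: ball_cong)
  finally show ?thesis by simp
qed

lemma sat_state:
  assumes "finite J" "S \<subseteq> J" "\<forall>j\<in>J. nonmodal (\<alpha> j)"
  shows "sat V v Y (state J \<alpha> S) \<longleftrightarrow> (\<forall>s\<in>S. sat V v {} (\<alpha> s)) \<and> (\<forall>s\<in>J-S. \<not> sat V v {} (\<alpha> s))"
proof -
  have f: "finite S" "finite (J - S)" using assms finite_subset by auto
  have a: "\<And>s. s \<in> J \<Longrightarrow> sat V v Y (\<alpha> s) = sat V v {} (\<alpha> s)"
    using assms(3) nm[of "\<alpha> _" V v Y "{}"] by simp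
  show ?thesis unfolding state_def using f assms(2) a by (auto simp: sat_BigAnd)
qed

lemma state_lemma:
  assumes "finite J" "\<forall>j\<in>J. nonmodal (\<alpha> j)"
  shows "(\<forall>S\<in>Pow J. sat V v Y (state J \<alpha> S) \<longrightarrow> (\<exists>s\<in>S. R s)) \<longleftrightarrow> (\<exists>j\<in>J. sat V v {} (\<alpha> j) \<and> R j)"
proof
  assume H: "\<forall>S\<in>Pow J. sat V v Y (state J \<alpha> S) \<longrightarrow> (\<exists>s\<in>S. R s)"
  let ?S = "{s\<in>J. sat V v {} (\<alpha> s)}"
  have "sat V v Y (state J \<alpha> ?S)" using assms by (subst sat_state) auto
  then show "\<exists>j\<in>J. sat V v {} (\<alpha> j) \<and> R j" using H by auto
next
  assume "\<exists>j\<in>J. sat V v {} (\<alpha> j) \<and> R j"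
  then obtain j where j: "j\<in>J" "sat V v {} (\<alpha> j)" "R j" by blast
  show "\<forall>S\<in>Pow J. sat V v Y (state J \<alpha> S) \<longrightarrow> (\<exists>s\<in>S. R s)"
  proof (intro ballI impI)
    fix S assume S: "S \<in> Pow J" "sat V v Y (state J \<alpha> S)"
    then have SJ: "S \<subseteq> J" by simp
    have "\<forall>s\<in>J-S. \<not> sat V v {} (\<alpha> s)" using S(2) unfolding sat_state[OF assms(1) SJ assms(2)] by blast
    then have "j \<in> S" using j by blast
    then show "\<exists>s\<in>S. R s" using j by blast
  qed
qed


lemma inner:
  assumes "finite J" "\<forall>j\<in>J. finite (E j)"
    "\<forall>j\<in>J. nonmodal (\<alpha> j) \<and> nonmodal (\<beta> j) \<and> (\<forall>m\<in>E j. nonmodal (\<gamma> m))"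
    and iK: "\<And>u Y. sat V u Y (info \<phi> \<psi> K) \<longleftrightarrow> u \<in> IK"
  shows "sat V v X (BigAnd (\<lambda>S. Imp (state J \<alpha> S)
               (BigOr (\<lambda>s. And (Box (Imp (info \<phi> \<psi> K) (\<beta> s)))
                               (BigAnd (\<lambda>m. Dia (And (info \<phi> \<psi> K) (\<gamma> m))) (E s))) S))
             (Pow J))
    \<longleftrightarrow> (\<exists>j\<in>J. sat V v {} (\<alpha> j) \<and> (\<forall>u\<in>X\<inter>IK. sat V u {} (\<beta> j)) \<and> (\<forall>m\<in>E j. \<exists>u\<in>X\<inter>IK. sat V u {} (\<gamma> m)))"
proof -
  let ?F = "\<lambda>s. And (Box (Imp (info \<phi> \<psi> K) (\<beta> s))) (BigAnd (\<lambda>m. Dia (And (info \<phi> \<psi> K) (\<gamma> m))) (E s))"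
  have "sat V v X (BigAnd (\<lambda>S. Imp (state J \<alpha> S) (BigOr ?F S)) (Pow J))
     \<longleftrightarrow> (\<forall>S\<in>Pow J. sat V v X (state J \<alpha> S) \<longrightarrow> sat V v X (BigOr ?F S))"
    using assms(1) by (simp only: sat_BigAnd finite_Pow_iff sat_Imp)
  also have "\<dots> \<longleftrightarrow> (\<forall>S\<in>Pow J. sat V v X (state J \<alpha> S) \<longrightarrow> (\<exists>s\<in>S. sat V v X (?F s)))"
  proof (intro ball_cong refl)
    fix S assume "S \<in> Pow J"
    then have "finite S" using assms(1) finite_subset by auto
    then show "(sat V v X (state J \<alpha> S) \<longrightarrow> sat V v X (BigOr ?F S)) =
      (sat V v X (state J \<alpha> S) \<longrightarrow> (\<exists>s\<in>S. sat V v X (?F s)))" by (simp only: sat_BigOr)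
  qed
  also have "\<dots> \<longleftrightarrow> (\<exists>j\<in>J. sat V v {} (\<alpha> j) \<and> sat V v X (?F j))"
    using assms(1,3) by (intro state_lemma) auto
  also have "\<dots> \<longleftrightarrow> (\<exists>j\<in>J. sat V v {} (\<alpha> j) \<and> (\<forall>u\<in>X\<inter>IK. sat V u {} (\<beta> j)) \<and> (\<forall>m\<in>E j. \<exists>u\<in>X\<inter>IK. sat V u {} (\<gamma> m)))"
  proof (intro bex_cong refl conj_cong)
    fix j assume j: "j \<in> J"
    have b: "\<And>u. sat V u X (\<beta> j) = sat V u {} (\<beta> j)" using j assms(3) nm[of "\<beta> j" V _ X "{}"] by simp
    have g: "\<And>u m. m \<in> E j \<Longrightarrow> sat V u X (\<gamma> m) = sat V u {} (\<gamma> m)" using j assms(3) nm[of "\<gamma> _" V _ X "{}"] by simp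
    have fe: "finite (E j)" using j assms(2) by simp
    show "sat V v X (?F j) \<longleftrightarrow> (\<forall>u\<in>X\<inter>IK. sat V u {} (\<beta> j)) \<and> (\<forall>m\<in>E j. \<exists>u\<in>X\<inter>IK. sat V u {} (\<gamma> m))"
      using fe by (auto simp: sat_BigAnd iK b g)
  qed
  finally show ?thesis .
qed

lemma subset_Collect_self: "(A \<subseteq> {v\<in>A. Q v}) = (\<forall>v\<in>A. Q v)" by auto

theorem proposition14:
  fixes W :: "'w set" and V :: "'p \<Rightarrow> 'w set" and w :: 'w and X :: "'w set"
    and I :: "'i set" and \<phi> \<psi> :: "'i \<Rightarrow> 'p form" and D :: "'i \<Rightarrow> 'n set" and \<chi> :: "'n \<Rightarrow> 'p form"
    and J :: "'j set" and \<alpha> \<beta> :: "'j \<Rightarrow> 'p form" and E :: "'j \<Rightarrow> 'm set" and \<gamma> :: "'m \<Rightarrow> 'p form"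
  assumes "is_model W V" and "w \<in> W" and "X \<subseteq> W"
    and "finite I" and "finite J"
    and "\<forall>i\<in>I. finite (D i)" and "\<forall>j\<in>J. finite (E j)"
    and "\<forall>i\<in>I. nonmodal (\<phi> i) \<and> nonmodal (\<psi> i) \<and> (\<forall>n\<in>D i. nonmodal (\<chi> n))"
    and "\<forall>j\<in>J. nonmodal (\<alpha> j) \<and> nonmodal (\<beta> j) \<and> (\<forall>m\<in>E j. nonmodal (\<gamma> m))"
  shows "sat V w X (Cond (Theta I \<phi> \<psi> D \<chi>) (Theta J \<alpha> \<beta> E \<gamma>))
         \<longleftrightarrow> sat V w X (lamstar I \<phi> \<psi> D \<chi> J \<alpha> \<beta> E \<gamma>)"
proof -
  define Th where "Th = (\<lambda>Y v. \<exists>i\<in>I. sat V v {} (\<phi> i) \<and> (\<forall>u\<in>Y. sat V u {} (\<psi> i)) \<and> (\<forall>n\<in>D i. \<exists>u\<in>Y. sat V u {} (\<chi> n)))"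
  define Om where "Om = (\<lambda>Y v. \<exists>j\<in>J. sat V v {} (\<alpha> j) \<and> (\<forall>u\<in>Y. sat V u {} (\<beta> j)) \<and> (\<forall>m\<in>E j. \<exists>u\<in>Y. sat V u {} (\<gamma> m)))"
  define G where "G = (\<lambda>K. \<forall>k\<in>K. \<forall>n\<in>D k. \<exists>u\<in>X. u \<in> Info V \<phi> \<psi> K \<and> sat V u {} (\<chi> n))"
  define Mx where "Mx = (\<lambda>K. G K \<and> (\<forall>L\<subseteq>I. (\<forall>u\<in>X. u\<in>Info V \<phi> \<psi> K \<longrightarrow> u\<in>Info V \<phi> \<psi> L) \<and> (\<exists>u\<in>X. u\<notin>Info V \<phi> \<psi> K \<and> u\<in>Info V \<phi> \<psi> L) \<longrightarrow> \<not> G L))"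
  have Ieq: "Info V \<phi> \<psi> = (\<lambda>K. {u. (\<exists>k\<in>K. sat V u {} (\<phi> k)) \<and> (\<forall>k\<in>K. sat V u {} (\<psi> k))})"
    by (simp add: fun_eq_iff Info_def)
  have C: "(\<forall>X'. X'\<subseteq>X \<and> (\<forall>v\<in>X'. Th X' v) \<and> \<not>(\<exists>X''. X''\<subseteq>X \<and> (\<forall>v\<in>X''. Th X'' v) \<and> X'\<subset>X'')
            \<longrightarrow> (\<forall>v\<in>X'. Om X' v))
       \<longleftrightarrow> (\<forall>K\<subseteq>I. Mx K \<longrightarrow> (\<forall>v\<in>X \<inter> Info V \<phi> \<psi> K. Om (X \<inter> Info V \<phi> \<psi> K) v))"
    by (rule core[OF Th_def Ieq G_def Mx_def])
  have L: "sat V w X (Cond (Theta I \<phi> \<psi> D \<chi>) (Theta J \<alpha> \<beta> E \<gamma>)) \<longleftrightarrow>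
      (\<forall>X'. X'\<subseteq>X \<and> (\<forall>v\<in>X'. Th X' v) \<and> \<not>(\<exists>X''. X''\<subseteq>X \<and> (\<forall>v\<in>X''. Th X'' v) \<and> X'\<subset>X'')
            \<longrightarrow> (\<forall>v\<in>X'. Om X' v))"
    unfolding Th_def Om_def
    by (simp only: sat.simps sat_Theta[OF assms(4,6,8)] sat_Theta[OF assms(5,7,9)] subset_Collect_self)
  have iK: "\<And>K u Y. K \<subseteq> I \<Longrightarrow> sat V u Y (info \<phi> \<psi> K) \<longleftrightarrow> u \<in> Info V \<phi> \<psi> K"
    using assms(4,8) by (intro sat_info) (auto intro: finite_subset)
  have R: "sat V w X (lamstar I \<phi> \<psi> D \<chi> J \<alpha> \<beta> E \<gamma>) \<longleftrightarrow>
      (\<forall>K\<in>Pow I. sat V w X (maxi I \<phi> \<psi> D \<chi> K) \<longrightarrow> (\<forall>v\<in>X. sat V v X (info \<phi> \<psi> K) \<longrightarrow>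
         sat V v X (BigAnd (\<lambda>S. Imp (state J \<alpha> S)
               (BigOr (\<lambda>s. And (Box (Imp (info \<phi> \<psi> K) (\<beta> s)))
                               (BigAnd (\<lambda>m. Dia (And (info \<phi> \<psi> K) (\<gamma> m))) (E s))) S))
             (Pow J))))"
    unfolding lamstar_def using assms(4) by (simp only: sat_BigAnd finite_Pow_iff sat_Imp sat.simps)
  also have "\<dots> \<longleftrightarrow> (\<forall>K\<subseteq>I. Mx K \<longrightarrow> (\<forall>v\<in>X \<inter> Info V \<phi> \<psi> K. Om (X \<inter> Info V \<phi> \<psi> K) v))"
  proof -
    have PK: "(sat V w X (maxi I \<phi> \<psi> D \<chi> K) \<longrightarrow> (\<forall>v\<in>X. sat V v X (info \<phi> \<psi> K) \<longrightarrow>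
         sat V v X (BigAnd (\<lambda>S. Imp (state J \<alpha> S)
               (BigOr (\<lambda>s. And (Box (Imp (info \<phi> \<psi> K) (\<beta> s)))
                               (BigAnd (\<lambda>m. Dia (And (info \<phi> \<psi> K) (\<gamma> m))) (E s))) S))
             (Pow J)))) \<longleftrightarrow> (Mx K \<longrightarrow> (\<forall>v\<in>X \<inter> Info V \<phi> \<psi> K. Om (X \<inter> Info V \<phi> \<psi> K) v))"
      if K: "K \<subseteq> I" for K
    proof -
    have mx: "sat V w X (maxi I \<phi> \<psi> D \<chi> K) \<longleftrightarrow> Mx K"
      unfolding Mx_def G_def using sat_maxi[OF assms(4,6) K assms(8)] by simp
    have inn: "\<And>v. sat V v X (BigAnd (\<lambda>S. Imp (state J \<alpha> S)
               (BigOr (\<lambda>s. And (Box (Imp (info \<phi> \<psi> K) (\<beta> s)))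
                               (BigAnd (\<lambda>m. Dia (And (info \<phi> \<psi> K) (\<gamma> m))) (E s))) S))
             (Pow J)) \<longleftrightarrow> Om (X \<inter> Info V \<phi> \<psi> K) v"
      unfolding Om_def by (rule inner[OF assms(5,7,9) iK[OF K]])
    show ?thesis using mx inn iK[OF K] by auto
    qed
    show ?thesis using PK by blast
  qed
  finally show ?thesis using L C by simp
qed

end
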